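(* Fix an integer horizon $T\ge 1$, constants $r_f>0$, $a\in\mathbb{R}$, $\sigma>0$, a temperature $\lambda>0$, a target $b\in\mathbb{R}$ and a Lagrange multiplier $w\in\mathbb{R}$. Consider the discrete-time exploratory mean–variance problem with wealth dynamics $x_{t+1}^{\pi}=r_f x_t^{\pi}+r_t u_t^{\pi}$, $t=0,\dots,T-1$, and optimal value function $$J^*(t,x;w)=\min_{\pi_t,\dots,\pi_{T-1}}\mathbb{E}\Big[(x_T^{\pi}-w)^2+\lambda\sum_{s=t}^{T-1}\int_{\mathbb{R}}\pi_s(u)\ln\pi_s(u)\,du\ \Big|\ x_t^{\pi}=x\Big]-(w-b)^2,$$ with $J^*(T,x;w)=(x-w)^2-(w-b)^2$. Then for every $t\in\{0,1,\dots,T\}$ and $x\in\mathbb{R}$, $$J^*(t,x;w)=\Big(\frac{\sigma^2 r_f^2}{a^2+\sigma^2}\Big)^{T-t}(x-\rho_t w)^2+\frac{\lambda}{2}(T-t)\ln\Big(\frac{a^2+\sigma^2}{\pi\lambda}\Big)+\frac{\lambda}{2}\sum_{i=t+1}^{T}(T-i)\ln\Big(\frac{\sigma^2 r_f^2}{a^2+\sigma^2}\Big)-(w-b)^2,$$ where $\rho_t=(r_f^{-1})^{T-t}$. Moreover, for $t\in\{0,\dots,T-1\}$ the optimal feedback control is Gaussian, with density $$\pi^*(u;t,x,w)=\mathcal{N}\Big(u\ \Big|\ -\frac{a r_f(x-\rho_t w)}{a^2+\sigma^2},\ \frac{\lambda}{2(a^2+\sigma^2)}\Big(\frac{a^2+\sigma^2}{\sigma^2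 r_f^2}\Big)^{T-t-1}\Big).$$
   Context: Market: one risk-free asset with (gross) return rate $r_f$ per period and one risky asset whose excess return from period $t$ to $t+1$ is a random variable $r_t$; the $r_t$, $t=0,\dots,T-1$, are statistically independent, each with mean $a$ and variance $\sigma^2$ (no other distributional assumption). A (distributional, feedback) control policy is a sequence $\pi=(\pi_0,\dots,\pi_{T-1})$ where each $\pi_t=\pi_t(\cdot;t,x,w)$ is a probability density on $\mathbb{R}$ depending on the current time and wealth; at time $t$ the amount $u_t^{\pi}$ invested in the risky asset is drawn from $\pi_t(\cdot;t,x_t^{\pi},w)$, and $r_t$ is independent of $u_t^{\pi}$ and of the history up to time $t$. Thus $\mathbb{E}_t[r_tu_t^{\pi}]=a\int u\,\pi_t(u)\,du$ and $\mathbb{E}_t[(r_tu_t^{\pi})^2]=(a^2+\sigma^2)\int u^2\pi_t(u)\,du$. The term $\lambda\sum_t\int\pi_t\ln\pi_t$ is the entropy regularization (negative accumulated entropy) weighted by $\lambda$. $\mathcal{N}(u\mid m,v)$ denotes the Gaussian density in $u$ with mean $m$ and variance $v$. The symbol $\pi$ without subscript inside the logarithm denotes the number $3.14159\ldots$. *)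

theory Defs
  imports "HOL-Probability.Probability"
begin

text \<open>Law of the (control, excess return) pair at time s: the control u has density
  pol s x, the excess return r has distribution R s, independent.\<close>
definition step_measure :: "(nat \<Rightarrow> real measure) \<Rightarrow> (nat \<Rightarrow> real \<Rightarrow> real \<Rightarrow> real)
    \<Rightarrow> nat \<Rightarrow> real \<Rightarrow> (real \<times> real) measure" where
  "step_measure R pol s x = density lborel (\<lambda>u. ennreal (pol s x u)) \<Otimes>\<^sub>M R s"

text \<open>Regularized cost-to-go of the feedback policy pol with k periods remaining
  (i.e. at time T - k): (x_T - w)^2 plus lambda times the accumulated negative entropy,
  in conditional expectation given current wealth x.\<close>
primrec ctg :: "real \<Rightarrow> (nat \<Rightarrow> real measure) \<Rightarrow> real \<Rightarrow> real \<Rightarrow> nat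
    \<Rightarrow> (nat \<Rightarrow> real \<Rightarrow> real \<Rightarrow> real) \<Rightarrow> nat \<Rightarrow> real \<Rightarrow> real" where
  "ctg rf R lam w T pol 0 x = (x - w)\<^sup>2"
| "ctg rf R lam w T pol (Suc k) x =
     (\<integral>p. ctg rf R lam w T pol k (rf * x + snd p * fst p) \<partial>(step_measure R pol (T - Suc k) x))
     + lam * (\<integral>u. pol (T - Suc k) x u * ln (pol (T - Suc k) x u) \<partial>lborel)"

definition admissible :: "real \<Rightarrow> (nat \<Rightarrow> real measure) \<Rightarrow> real \<Rightarrow> real \<Rightarrow> nat
    \<Rightarrow> (nat \<Rightarrow> real \<Rightarrow> real \<Rightarrow> real) \<Rightarrow> nat \<Rightarrow> bool" where
  "admissible rf R lam w T pol t \<longleftrightarrow>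
    (\<forall>s x. t \<le> s \<and> s < T \<longrightarrow>
       pol s x \<in> borel_measurable borel
     \<and> (\<forall>u. 0 \<le> pol s x u)
     \<and> integrable lborel (pol s x)
     \<and> (\<integral>u. pol s x u \<partial>lborel) = 1
     \<and> integrable lborel (\<lambda>u. u\<^sup>2 * pol s x u)
     \<and> integrable lborel (\<lambda>u. pol s x u * ln (pol s x u))
     \<and> integrable (step_measure R pol s x)
          (\<lambda>p. ctg rf R lam w T pol (T - Suc s) (rf * x + snd p * fst p)))"

definition J_opt :: "real \<Rightarrow> (nat \<Rightarrow> real measure) \<Rightarrow> real \<Rightarrow> real \<Rightarrow> real \<Rightarrow> nat
    \<Rightarrow> nat \<Rightarrow> real \<Rightarrow> real" where
  "J_opt rf R lam w b T t x =
     Inf {ctg rf R lam w T pol (T - t) x - (w - b)\<^sup>2 | pol. admissible rf R lam w T pol t}"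

text \<open>N(u | m, v) with v the variance.\<close>
definition gauss :: "real \<Rightarrow> real \<Rightarrow> real \<Rightarrow> real" where
  "gauss m v u = normal_density m (sqrt v) u"

end

theory Submission
  imports Defs
begin

lemma pair_prod_integral:
  fixes f g :: "_ \<Rightarrow> real"
  assumes "sigma_finite_measure M1" "sigma_finite_measure M2" "integrable M1 f" "integrable M2 g"
  shows "integrable (M1 \<Otimes>\<^sub>M M2) (\<lambda>z. f (fst z) * g (snd z))"
    and "(\<integral>z. f (fst z) * g (snd z) \<partial>(M1 \<Otimes>\<^sub>M M2)) = (\<integral>x. f x \<partial>M1) * (\<integral>y. g y \<partial>M2)"
proof -
  interpret pair_sigma_finite M1 M2 using assms by (simp add: pair_sigma_finite_def)
  have [measurable]: "f \<in> borel_measurable M1" "g \<in> borel_measurable M2"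
    using assms by auto
  show int: "integrable (M1 \<Otimes>\<^sub>M M2) (\<lambda>z. f (fst z) * g (snd z))"
  proof (rule Fubini_integrable)
    show "(\<lambda>z. f (fst z) * g (snd z)) \<in> borel_measurable (M1 \<Otimes>\<^sub>M M2)" by measurable
    have "(\<lambda>x. \<integral>y. norm (f (fst (x, y)) * g (snd (x, y))) \<partial>M2) = (\<lambda>x. norm (f x) * (\<integral>y. norm (g y) \<partial>M2))"
      by (simp add: abs_mult)
    then show "integrable M1 (\<lambda>x. \<integral>y. norm (f (fst (x, y)) * g (snd (x, y))) \<partial>M2)"
      using assms(3) by (simp add: integrable_mult_left)
    show "AE x in M1. integrable M2 (\<lambda>y. f (fst (x, y)) * g (snd (x, y)))"
      using assms(4) by simp
  qed
  show "(\<integral>z. f (fst z) * g (snd z) \<partial>(M1 \<Otimes>\<^sub>M M2)) = (\<integral>x. f x \<partial>M1) * (\<integral>y. g y \<partial>M2)"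
    using integral_fst'[OF int] by simp
qed

lemma dens_facts:
  fixes p :: "real \<Rightarrow> real"
  assumes [measurable]: "p \<in> borel_measurable borel" and nn: "\<And>u. 0 \<le> p u"
    and "integrable lborel p" and "(\<integral>u. p u \<partial>lborel) = 1"
  shows "prob_space (density lborel (\<lambda>u. ennreal (p u)))"
    and "\<And>h. h \<in> borel_measurable borel \<Longrightarrow>
        integrable (density lborel (\<lambda>u. ennreal (p u))) h \<longleftrightarrow> integrable lborel (\<lambda>u. p u * h u)"
    and "\<And>h. h \<in> borel_measurable borel \<Longrightarrow>
        (\<integral>u. h u \<partial>density lborel (\<lambda>u. ennreal (p u))) = (\<integral>u. p u * h u \<partial>lborel)"
proof -
  show "prob_space (density lborel (\<lambda>u. ennreal (p u)))"
    by standard (use assms in \<open>simp add: emeasure_density nn_integral_eq_integral\<close>)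
  fix h :: "real \<Rightarrow> real" assume [measurable]: "h \<in> borel_measurable borel"
  show "integrable (density lborel (\<lambda>u. ennreal (p u))) h \<longleftrightarrow> integrable lborel (\<lambda>u. p u * h u)"
    using integrable_density[of h lborel p] nn by simp
  show "(\<integral>u. h u \<partial>density lborel (\<lambda>u. ennreal (p u))) = (\<integral>u. p u * h u \<partial>lborel)"
    using integral_density[of h lborel p] nn by simp
qed

definition dens :: "(real \<Rightarrow> real) \<Rightarrow> bool" where
  "dens p \<longleftrightarrow> p \<in> borel_measurable borel \<and> (\<forall>u. 0 \<le> p u) \<and> integrable lborel p
      \<and> (\<integral>u. p u \<partial>lborel) = 1 \<and> integrable lborel (\<lambda>u. u\<^sup>2 * p u)"

lemma dens_first:
  assumes "dens p"
  shows "integrable lborel (\<lambda>u. p u * u)"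
proof -
  have [measurable]: "p \<in> borel_measurable borel" using assms by (simp add: dens_def)
  have "integrable lborel (\<lambda>u. p u + u\<^sup>2 * p u)"
    using assms by (simp add: dens_def)
  then show ?thesis
  proof (rule Bochner_Integration.integrable_bound)
    show "(\<lambda>u. p u * u) \<in> borel_measurable lborel" by measurable
    show "AE x in lborel. norm (p x * x) \<le> norm (p x + x\<^sup>2 * p x)"
    proof (rule AE_I2)
      fix x
      have p: "0 \<le> p x" using assms by (simp add: dens_def)
      have "0 \<le> (\<bar>x\<bar> - 1)\<^sup>2" by simp
      hence "\<bar>x\<bar> \<le> 1 + x\<^sup>2" by (simp add: power2_eq_square algebra_simps abs_mult_self_eq)
      hence "p x * \<bar>x\<bar> \<le> p x * (1 + x\<^sup>2)" using p by (rule mult_left_mono)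
      then show "norm (p x * x) \<le> norm (p x + x\<^sup>2 * p x)"
        using p by (simp add: abs_mult algebra_simps)
    qed
  qed
qed

lemma gibbs:
  fixes p g :: "real \<Rightarrow> real"
  assumes d: "dens p" and pl: "integrable lborel (\<lambda>u. p u * ln (p u))"
    and [measurable]: "g \<in> borel_measurable borel" and gp: "\<And>u. 0 < g u"
    and gi: "integrable lborel g" and g1: "(\<integral>u. g u \<partial>lborel) = 1"
    and pg: "integrable lborel (\<lambda>u. p u * ln (g u))"
  shows "(\<integral>u. p u * ln (g u) \<partial>lborel) \<le> (\<integral>u. p u * ln (p u) \<partial>lborel)"
proof -
  have pn: "\<And>u. 0 \<le> p u" and pi: "integrable lborel p" and p1: "(\<integral>u. p u \<partial>lborel) = 1"
    using d by (auto simp: dens_def)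
  have pw: "p u * ln (g u) - p u * ln (p u) \<le> g u - p u" for u
  proof (cases "p u = 0")
    case True then show ?thesis using gp[of u] by simp
  next
    case False
    then have pp: "p u > 0" using pn[of u] by simp
    have "p u * ln (g u) - p u * ln (p u) = p u * ln (g u / p u)"
      using pp gp[of u] by (simp add: ln_div right_diff_distrib)
    also have "\<dots> \<le> p u * (g u / p u - 1)"
      using ln_le_minus_one[of "g u / p u"] pp gp[of u] by (intro mult_left_mono) auto
    also have "\<dots> = g u - p u" using pp by (simp add: field_simps)
    finally show ?thesis .
  qed
  have "(\<integral>u. p u * ln (g u) - p u * ln (p u) \<partial>lborel) \<le> (\<integral>u. g u - p u \<partial>lborel)"
    by (rule integral_mono) (use pg pl gi pi pw in auto)
  also have "\<dots> = 0" using gi pi g1 p1 by simp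
  finally show ?thesis using pg pl by simp
qed

lemma ln_gauss:
  assumes "v > 0"
  shows "0 < gauss m v u" and "ln (gauss m v u) = - ln (2 * pi * v) / 2 - (u - m)\<^sup>2 / (2 * v)"
proof -
  show "0 < gauss m v u" using assms by (simp add: gauss_def normal_density_pos)
  have sq: "(sqrt v)\<^sup>2 = v" using assms by simp
  have "gauss m v u = 1 / sqrt (2 * pi * v) * exp (- (u - m)\<^sup>2 / (2 * v))"
    by (simp add: gauss_def normal_density_def sq)
  also have "ln \<dots> = - ln (sqrt (2 * pi * v)) + (- (u - m)\<^sup>2 / (2 * v))"
    using assms by (simp add: ln_mult ln_div)
  also have "\<dots> = - ln (2 * pi * v) / 2 - (u - m)\<^sup>2 / (2 * v)"
    using assms by (simp add: ln_sqrt)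
  finally show "ln (gauss m v u) = - ln (2 * pi * v) / 2 - (u - m)\<^sup>2 / (2 * v)" .
qed

lemma plng:
  assumes d: "dens p" and v: "v > 0"
  shows "integrable lborel (\<lambda>u. p u * ln (gauss m v u))"
    and "(\<integral>u. p u * ln (gauss m v u) \<partial>lborel) =
          - ln (2 * pi * v) / 2 - ((\<integral>u. u\<^sup>2 * p u \<partial>lborel) - 2 * m * (\<integral>u. p u * u \<partial>lborel) + m\<^sup>2) / (2 * v)"
proof -
  have pi: "integrable lborel p" and p1: "(\<integral>u. p u \<partial>lborel) = 1" and p2: "integrable lborel (\<lambda>u. u\<^sup>2 * p u)"
    using d by (auto simp: dens_def)
  have p1i: "integrable lborel (\<lambda>u. p u * u)" using dens_first[OF d] .
  define c0 where "c0 = - ln (2 * pi * v) / 2 - m\<^sup>2 / (2 * v)"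
  define c1 where "c1 = m / v"
  define c2 where "c2 = - 1 / (2 * v)"
  have eq: "(\<lambda>u. p u * ln (gauss m v u)) = (\<lambda>u. c0 * p u + c1 * (p u * u) + c2 * (u\<^sup>2 * p u))"
  proof
    fix u
    show "p u * ln (gauss m v u) = c0 * p u + c1 * (p u * u) + c2 * (u\<^sup>2 * p u)"
      unfolding ln_gauss(2)[OF v] c0_def c1_def c2_def using v
      by (simp add: field_simps power2_eq_square)
  qed
  show "integrable lborel (\<lambda>u. p u * ln (gauss m v u))"
    unfolding eq using pi p1i p2 by simp
  have "(\<integral>u. p u * ln (gauss m v u) \<partial>lborel) = c0 * 1 + c1 * (\<integral>u. p u * u \<partial>lborel) + c2 * (\<integral>u. u\<^sup>2 * p u \<partial>lborel)"
    unfolding eq using pi p1i p2 p1 by simp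
  also have "\<dots> = - ln (2 * pi * v) / 2 - ((\<integral>u. u\<^sup>2 * p u \<partial>lborel) - 2 * m * (\<integral>u. p u * u \<partial>lborel) + m\<^sup>2) / (2 * v)"
    unfolding c0_def c1_def c2_def using v by (simp add: field_simps)
  finally show "(\<integral>u. p u * ln (gauss m v u) \<partial>lborel) =
          - ln (2 * pi * v) / 2 - ((\<integral>u. u\<^sup>2 * p u \<partial>lborel) - 2 * m * (\<integral>u. p u * u \<partial>lborel) + m\<^sup>2) / (2 * v)" .
qed

lemma gauss_dens:
  assumes v: "v > 0"
  shows "dens (gauss m v)" and "integrable lborel (\<lambda>u. gauss m v u * ln (gauss m v u))"
proof -
  have sv: "sqrt v > 0" using v by simp
  have i0: "integrable lborel (\<lambda>u. gauss m v u * (u - m) ^ 2)"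
    using integrable_normal_moment[OF sv, of m 2] by (simp add: gauss_def)
  have i1: "integrable lborel (\<lambda>u. gauss m v u * u)"
    using integrable_normal_moment_nz_1[OF sv, of m] by (simp add: gauss_def)
  have ge: "gauss m v = normal_density m (sqrt v)" by (rule ext) (simp add: gauss_def)
  have i: "integrable lborel (gauss m v)" using integrable_normal_density[OF sv] by (simp add: ge)
  have eq: "(\<lambda>u. u\<^sup>2 * gauss m v u) = (\<lambda>u. gauss m v u * (u - m) ^ 2 + 2 * m * (gauss m v u * u) - m\<^sup>2 * gauss m v u)"
    by (rule ext) (simp add: power2_eq_square algebra_simps)
  have "integrable lborel (\<lambda>u. u\<^sup>2 * gauss m v u)"
    unfolding eq using i0 i1 i by simp
  then show d: "dens (gauss m v)"
    unfolding dens_def using i integral_normal_density[OF sv, of m] by (simp add: ge)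
  show "integrable lborel (\<lambda>u. gauss m v u * ln (gauss m v u))"
    using plng(1)[OF d v] .
qed

locale mvs =
  fixes T :: nat and rf a \<sigma> lam w :: real and R :: "nat \<Rightarrow> real measure"
  assumes rf: "rf > 0" and sig: "\<sigma> > 0" and lam: "lam > 0"
    and RR: "\<And>t. t < T \<Longrightarrow> prob_space (R t) \<and> sets (R t) = sets borel
            \<and> integrable (R t) (\<lambda>r. r) \<and> integrable (R t) (\<lambda>r. r\<^sup>2)
            \<and> (\<integral>r. r \<partial>R t) = a \<and> (\<integral>r. (r - a)\<^sup>2 \<partial>R t) = \<sigma>\<^sup>2"
begin

lemma R_sq: assumes "t < T" shows "(\<integral>r. r\<^sup>2 \<partial>R t) = a\<^sup>2 + \<sigma>\<^sup>2"
proof -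
  interpret prob_space "R t" using RR[OF assms] by simp
  have i1: "integrable (R t) (\<lambda>r. r)" and i2: "integrable (R t) (\<lambda>r. r\<^sup>2)"
    and e1: "(\<integral>r. r \<partial>R t) = a" and e2: "(\<integral>r. (r - a)\<^sup>2 \<partial>R t) = \<sigma>\<^sup>2"
    using RR[OF assms] by auto
  have "(\<lambda>r. (r - a)\<^sup>2) = (\<lambda>r. r\<^sup>2 - 2 * a * r + a\<^sup>2)"
    by (simp add: power2_eq_square algebra_simps)
  then have "\<sigma>\<^sup>2 = (\<integral>r. r\<^sup>2 - 2 * a * r + a\<^sup>2 \<partial>R t)" using e2 by simp
  also have "\<dots> = (\<integral>r. r\<^sup>2 \<partial>R t) - 2 * a * a + a\<^sup>2"
    using i1 i2 e1 by (simp add: prob_space)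
  finally show ?thesis by (simp add: power2_eq_square)
qed

lemma step_sq:
  assumes "s < T" and "dens (pol s x)"
  shows "integrable (step_measure R pol s x) (\<lambda>z. (y + snd z * fst z)\<^sup>2)"
    and "(\<integral>z. (y + snd z * fst z)\<^sup>2 \<partial>step_measure R pol s x) =
           y\<^sup>2 + 2 * y * a * (\<integral>u. pol s x u * u \<partial>lborel) + (a\<^sup>2 + \<sigma>\<^sup>2) * (\<integral>u. u\<^sup>2 * pol s x u \<partial>lborel)"
proof -
  define p where "p = pol s x"
  have d: "dens p" using assms p_def by simp
  have pm[measurable]: "p \<in> borel_measurable borel" and pn: "\<And>u. 0 \<le> p u" and pi: "integrable lborel p"
    and p1: "(\<integral>u. p u \<partial>lborel) = 1" and p2: "integrable lborel (\<lambda>u. u\<^sup>2 * p u)"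
    using d by (auto simp: dens_def)
  have p1i: "integrable lborel (\<lambda>u. p u * u)" using dens_first[OF d] .
  note D = dens_facts[OF pm pn pi p1]
  interpret P: prob_space "density lborel (\<lambda>u. ennreal (p u))" using D(1) .
  interpret Rs: prob_space "R s" using RR[OF assms(1)] by simp
  have sfP: "sigma_finite_measure (density lborel (\<lambda>u. ennreal (p u)))"
    by (simp add: P.sigma_finite_measure_axioms)
  have sfR: "sigma_finite_measure (R s)" by (simp add: Rs.sigma_finite_measure_axioms)
  have r1: "integrable (R s) (\<lambda>r. r)" and r2: "integrable (R s) (\<lambda>r. r\<^sup>2)"
    and e1: "(\<integral>r. r \<partial>R s) = a" using RR[OF assms(1)] by auto
  have e2: "(\<integral>r. r\<^sup>2 \<partial>R s) = a\<^sup>2 + \<sigma>\<^sup>2" using R_sq[OF assms(1)] .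
  have f1: "integrable (density lborel (\<lambda>u. ennreal (p u))) (\<lambda>u. y\<^sup>2)" by simp
  have f2: "integrable (density lborel (\<lambda>u. ennreal (p u))) (\<lambda>u. 2 * y * u)"
  proof -
    have "(\<lambda>u. p u * (2 * y * u)) = (\<lambda>u. (2 * y) * (p u * u))" by (simp add: algebra_simps)
    then have "integrable lborel (\<lambda>u. p u * (2 * y * u))" using p1i by simp
    then show ?thesis using D(2)[of "\<lambda>u. 2 * y * u"] by simp
  qed
  have f3: "integrable (density lborel (\<lambda>u. ennreal (p u))) (\<lambda>u. u\<^sup>2)"
    using D(2)[of "\<lambda>u. u\<^sup>2"] p2 by (simp add: mult.commute)
  have g1: "integrable (R s) (\<lambda>r. 1)" by simp
  note A1 = pair_prod_integral[OF sfP sfR f1 g1]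
  note A2 = pair_prod_integral[OF sfP sfR f2 r1]
  note A3 = pair_prod_integral[OF sfP sfR f3 r2]
  have eq: "(\<lambda>z. (y + snd z * fst z)\<^sup>2) = (\<lambda>z. (y\<^sup>2 * 1 + 2 * y * fst z * snd z) + (fst z)\<^sup>2 * (snd z)\<^sup>2)"
    by (rule ext) (simp add: power2_eq_square algebra_simps)
  have SM: "step_measure R pol s x = density lborel (\<lambda>u. ennreal (p u)) \<Otimes>\<^sub>M R s"
    by (simp add: step_measure_def p_def)
  show "integrable (step_measure R pol s x) (\<lambda>z. (y + snd z * fst z)\<^sup>2)"
    unfolding eq SM by (rule Bochner_Integration.integrable_add[OF Bochner_Integration.integrable_add[OF A1(1) A2(1)] A3(1)])
  have i2: "(\<integral>u. 2 * y * u \<partial>density lborel (\<lambda>u. ennreal (p u))) = 2 * y * (\<integral>u. p u * u \<partial>lborel)"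
  proof -
    have "(\<lambda>u. p u * (2 * y * u)) = (\<lambda>u. (2 * y) * (p u * u))" by (simp add: algebra_simps)
    then show ?thesis using D(3)[of "\<lambda>u. 2 * y * u"] by simp
  qed
  have i3: "(\<integral>u. u\<^sup>2 \<partial>density lborel (\<lambda>u. ennreal (p u))) = (\<integral>u. u\<^sup>2 * p u \<partial>lborel)"
    using D(3)[of "\<lambda>u. u\<^sup>2"] by (simp add: mult.commute)
  have "(\<integral>z. (y + snd z * fst z)\<^sup>2 \<partial>step_measure R pol s x)
      = (\<integral>z. y\<^sup>2 * 1 + 2 * y * fst z * snd z \<partial>(density lborel (\<lambda>u. ennreal (p u)) \<Otimes>\<^sub>M R s))
        + (\<integral>z. (fst z)\<^sup>2 * (snd z)\<^sup>2 \<partial>(density lborel (\<lambda>u. ennreal (p u)) \<Otimes>\<^sub>M R s))"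
    unfolding eq SM by (rule Bochner_Integration.integral_add[OF Bochner_Integration.integrable_add[OF A1(1) A2(1)] A3(1)])
  also have "(\<integral>z. y\<^sup>2 * 1 + 2 * y * fst z * snd z \<partial>(density lborel (\<lambda>u. ennreal (p u)) \<Otimes>\<^sub>M R s))
     = (\<integral>z. y\<^sup>2 * 1 \<partial>(density lborel (\<lambda>u. ennreal (p u)) \<Otimes>\<^sub>M R s)) + 
       (\<integral>z. 2 * y * fst z * snd z \<partial>(density lborel (\<lambda>u. ennreal (p u)) \<Otimes>\<^sub>M R s))"
    by (rule Bochner_Integration.integral_add[OF A1(1) A2(1)])
  also have "(\<integral>z. y\<^sup>2 * 1 \<partial>(density lborel (\<lambda>u. ennreal (p u)) \<Otimes>\<^sub>M R s)) = y\<^sup>2"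
  proof -
    have "(\<integral>z. y\<^sup>2 * 1 \<partial>(density lborel (\<lambda>u. ennreal (p u)) \<Otimes>\<^sub>M R s))
       = (\<integral>u. y\<^sup>2 \<partial>density lborel (\<lambda>u. ennreal (p u))) * (\<integral>r. 1 \<partial>R s)" by (rule A1(2))
    also have "\<dots> = y\<^sup>2" using P.prob_space Rs.prob_space by simp
    finally show ?thesis .
  qed
  also have "(\<integral>z. 2 * y * fst z * snd z \<partial>(density lborel (\<lambda>u. ennreal (p u)) \<Otimes>\<^sub>M R s))
       = 2 * y * (\<integral>u. p u * u \<partial>lborel) * a"
  proof -
    have "(\<integral>z. 2 * y * fst z * snd z \<partial>(density lborel (\<lambda>u. ennreal (p u)) \<Otimes>\<^sub>M R s))
       = (\<integral>u. 2 * y * u \<partial>density lborel (\<lambda>u. ennreal (p u))) * (\<integral>r. r \<partial>R s)" by (rule A2(2))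
    then show ?thesis using i2 e1 by simp
  qed
  also have "(\<integral>z. (fst z)\<^sup>2 * (snd z)\<^sup>2 \<partial>(density lborel (\<lambda>u. ennreal (p u)) \<Otimes>\<^sub>M R s))
       = (\<integral>u. u\<^sup>2 * p u \<partial>lborel) * (a\<^sup>2 + \<sigma>\<^sup>2)"
  proof -
    have "(\<integral>z. (fst z)\<^sup>2 * (snd z)\<^sup>2 \<partial>(density lborel (\<lambda>u. ennreal (p u)) \<Otimes>\<^sub>M R s))
       = (\<integral>u. u\<^sup>2 \<partial>density lborel (\<lambda>u. ennreal (p u))) * (\<integral>r. r\<^sup>2 \<partial>R s)" by (rule A3(2))
    then show ?thesis using i3 e2 by simp
  qed
  finally show "(\<integral>z. (y + snd z * fst z)\<^sup>2 \<partial>step_measure R pol s x) =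
           y\<^sup>2 + 2 * y * a * (\<integral>u. pol s x u * u \<partial>lborel) + (a\<^sup>2 + \<sigma>\<^sup>2) * (\<integral>u. u\<^sup>2 * pol s x u \<partial>lborel)"
    by (simp add: p_def algebra_simps)
qed


definition AA where "AA = a\<^sup>2 + \<sigma>\<^sup>2"
definition qq where "qq = \<sigma>\<^sup>2 * rf\<^sup>2 / AA"
definition CC where "CC k = lam / 2 * real k * ln (AA / (pi * lam)) + lam / 2 * (\<Sum>j<k. real j * ln qq)"
definition VV where "VV k x = qq ^ k * (x - (1 / rf) ^ k * w)\<^sup>2 + CC k"
definition vv where "vv k = lam / (2 * AA) * (AA / (\<sigma>\<^sup>2 * rf\<^sup>2)) ^ k"
definition mm where "mm k x = - (a * rf * (x - (1 / rf) ^ (Suc k) * w)) / AA"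

lemma AA_pos: "AA > 0" using sig by (simp add: AA_def add_nonneg_pos)
lemma qq_pos: "qq > 0" using sig rf AA_pos by (simp add: qq_def)
lemma vv_pos: "vv k > 0" using sig rf AA_pos lam by (simp add: vv_def)

lemma step_alg:
  "qq ^ k * ((rf * x - (1 / rf) ^ k * w)\<^sup>2 + 2 * (rf * x - (1 / rf) ^ k * w) * a * M1 + AA * M2) + CC k
   + lam * (- ln (2 * pi * vv k) / 2 - (M2 - 2 * mm k x * M1 + (mm k x)\<^sup>2) / (2 * vv k))
   = VV (Suc k) x"
proof -
  define Q where "Q = qq ^ k"
  define y where "y = rf * x - (1 / rf) ^ k * w"
  have Qp: "Q > 0" using qq_pos by (simp add: Q_def)
  have A: "AA > 0" by (rule AA_pos)
  have hv: "vv k = lam / (2 * AA * Q)"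
  proof -
    have "AA / (\<sigma>\<^sup>2 * rf\<^sup>2) = 1 / qq" using A sig rf by (simp add: qq_def)
    then show ?thesis by (simp add: vv_def Q_def power_one_over)
  qed
  have hln: "ln (2 * pi * vv k) = ln pi + ln lam - ln AA - real k * ln qq"
  proof -
    have "2 * pi * vv k = pi * lam / (AA * Q)" using hv A Qp by simp
    then have "ln (2 * pi * vv k) = ln pi + ln lam - ln AA - ln Q"
      using A Qp lam by (simp add: ln_div ln_mult pi_gt_zero)
    then show ?thesis using qq_pos by (simp add: Q_def ln_realpow)
  qed
  have hC: "CC (Suc k) = CC k + lam / 2 * (ln AA - ln pi - ln lam) + lam / 2 * real k * ln qq"
    using A lam by (simp add: CC_def ln_div ln_mult pi_gt_zero algebra_simps) (simp add: field_simps)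
  have hy: "x - (1 / rf) ^ Suc k * w = y / rf" using rf by (simp add: y_def field_simps)
  have hm: "mm k x = - a * y / AA"
  proof -
    have "rf * (x - (1 / rf) ^ Suc k * w) = y" using hy rf by simp
    then show ?thesis by (simp add: mm_def)
  qed
  have hq: "qq ^ Suc k = qq * Q" by (simp add: Q_def)
  have P1: "Q * (y\<^sup>2 + 2 * y * a * M1 + AA * M2) - Q * AA * (M2 - 2 * (- a * y / AA) * M1 + (- a * y / AA)\<^sup>2)
      = qq * Q * (y / rf)\<^sup>2"
  proof -
    have s2: "\<sigma>\<^sup>2 = AA - a\<^sup>2" by (simp add: AA_def)
    show ?thesis using A rf unfolding qq_def s2 by (simp add: field_simps power2_eq_square)
  qed
  have lv: "lam / (2 * vv k) = Q * AA" using hv lam A Qp by simp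
  have P2: "lam * (- ln (2 * pi * vv k) / 2 - (M2 - 2 * mm k x * M1 + (mm k x)\<^sup>2) / (2 * vv k))
     = - lam / 2 * (ln pi + ln lam - ln AA - real k * ln qq) - Q * AA * (M2 - 2 * (- a * y / AA) * M1 + (- a * y / AA)\<^sup>2)"
  proof -
    have "lam * ((M2 - 2 * mm k x * M1 + (mm k x)\<^sup>2) / (2 * vv k)) = (lam / (2 * vv k)) * (M2 - 2 * mm k x * M1 + (mm k x)\<^sup>2)"
      by simp
    then show ?thesis unfolding lv hln hm by (simp add: right_diff_distrib)
  qed
  have "VV (Suc k) x = qq * Q * (y / rf)\<^sup>2 + CC k + lam / 2 * (ln AA - ln pi - ln lam) + lam / 2 * real k * ln qq"
    unfolding VV_def hy hq hC by simp
  then show ?thesis unfolding Q_def[symmetric] y_def[symmetric] P2 using P1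
    by (simp add: algebra_simps)
qed


lemma step_prob:
  assumes "s < T" and "dens (pol s x)"
  shows "prob_space (step_measure R pol s x)"
proof -
  have pm: "pol s x \<in> borel_measurable borel" and pn: "\<And>u. 0 \<le> pol s x u" and pi: "integrable lborel (pol s x)"
    and p1: "(\<integral>u. pol s x u \<partial>lborel) = 1"
    using assms(2) by (auto simp: dens_def)
  interpret P: prob_space "density lborel (\<lambda>u. ennreal (pol s x u))"
    using dens_facts(1)[OF pm pn pi p1] .
  interpret Rs: prob_space "R s" using RR[OF assms(1)] by simp
  interpret PP: pair_prob_space "density lborel (\<lambda>u. ennreal (pol s x u))" "R s" by unfold_locales
  show ?thesis unfolding step_measure_def by (rule PP.prob_space_axioms)
qed

lemma VV_step:
  assumes "s < T" and "dens (pol s x)"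
  shows "integrable (step_measure R pol s x) (\<lambda>z. VV k (rf * x + snd z * fst z))"
    and "(\<integral>z. VV k (rf * x + snd z * fst z) \<partial>step_measure R pol s x) =
          qq ^ k * ((rf * x - (1 / rf) ^ k * w)\<^sup>2 + 2 * (rf * x - (1 / rf) ^ k * w) * a * (\<integral>u. pol s x u * u \<partial>lborel)
             + AA * (\<integral>u. u\<^sup>2 * pol s x u \<partial>lborel)) + CC k"
proof -
  define y where "y = rf * x - (1 / rf) ^ k * w"
  interpret S: prob_space "step_measure R pol s x" using step_prob[of s pol x, OF assms] .
  have eq: "(\<lambda>z. VV k (rf * x + snd z * fst z)) = (\<lambda>z. qq ^ k * (y + snd z * fst z)\<^sup>2 + CC k)"
    by (rule ext) (simp add: VV_def y_def algebra_simps)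
  note st = step_sq[of s pol x y, OF assms]
  show "integrable (step_measure R pol s x) (\<lambda>z. VV k (rf * x + snd z * fst z))"
    unfolding eq using st(1) by simp
  show "(\<integral>z. VV k (rf * x + snd z * fst z) \<partial>step_measure R pol s x) =
          qq ^ k * ((rf * x - (1 / rf) ^ k * w)\<^sup>2 + 2 * (rf * x - (1 / rf) ^ k * w) * a * (\<integral>u. pol s x u * u \<partial>lborel)
             + AA * (\<integral>u. u\<^sup>2 * pol s x u \<partial>lborel)) + CC k"
    unfolding eq y_def[symmetric] using st by (simp add: S.prob_space AA_def)
qed

lemma lower:
  assumes adm: "admissible rf R lam w T pol t"
  shows "k \<le> T - t \<Longrightarrow> VV k x \<le> ctg rf R lam w T pol k x"
proof (induction k arbitrary: x)
  case 0
  then show ?case by (simp add: VV_def CC_def)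
next
  case (Suc k)
  define s where "s = T - Suc k"
  have sT: "s < T" and ts: "t \<le> s" and ks: "T - Suc s = k" using Suc.prems by (auto simp: s_def)
  have A: "pol s x \<in> borel_measurable borel \<and> (\<forall>u. 0 \<le> pol s x u) \<and> integrable lborel (pol s x)
     \<and> (\<integral>u. pol s x u \<partial>lborel) = 1 \<and> integrable lborel (\<lambda>u. u\<^sup>2 * pol s x u)
     \<and> integrable lborel (\<lambda>u. pol s x u * ln (pol s x u))
     \<and> integrable (step_measure R pol s x) (\<lambda>p. ctg rf R lam w T pol k (rf * x + snd p * fst p))"
    using adm[unfolded admissible_def, rule_format, OF conjI[OF ts sT], where x=x] unfolding ks .
  have d: "dens (pol s x)" using A by (simp add: dens_def)
  have pl: "integrable lborel (\<lambda>u. pol s x u * ln (pol s x u))" using A by simp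
  have ci: "integrable (step_measure R pol s x) (\<lambda>p. ctg rf R lam w T pol k (rf * x + snd p * fst p))"
    using A by simp
  note VS = VV_step[of s pol x k, OF sT d]
  have IH: "VV k z \<le> ctg rf R lam w T pol k z" for z using Suc.IH Suc.prems by simp
  have i1: "(\<integral>z. VV k (rf * x + snd z * fst z) \<partial>step_measure R pol s x)
      \<le> (\<integral>z. ctg rf R lam w T pol k (rf * x + snd z * fst z) \<partial>step_measure R pol s x)"
    by (rule integral_mono[OF VS(1) ci IH])
  define g where "g = gauss (mm k x) (vv k)"
  have gd: "dens g" using gauss_dens(1)[OF vv_pos] by (simp add: g_def)
  have pg: "integrable lborel (\<lambda>u. pol s x u * ln (g u))" unfolding g_def by (rule plng(1)[OF d vv_pos])
  have gib: "(\<integral>u. pol s x u * ln (g u) \<partial>lborel) \<le> (\<integral>u. pol s x u * ln (pol s x u) \<partial>lborel)"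
    by (rule gibbs[OF d pl _ _ _ _ pg]) (use gd ln_gauss(1)[OF vv_pos] in \<open>auto simp: dens_def g_def\<close>)
  have pe: "(\<integral>u. pol s x u * ln (g u) \<partial>lborel) =
          - ln (2 * pi * vv k) / 2 - ((\<integral>u. u\<^sup>2 * pol s x u \<partial>lborel) - 2 * mm k x * (\<integral>u. pol s x u * u \<partial>lborel) + (mm k x)\<^sup>2) / (2 * vv k)"
    unfolding g_def by (rule plng(2)[OF d vv_pos])
  have "VV (Suc k) x = (\<integral>z. VV k (rf * x + snd z * fst z) \<partial>step_measure R pol s x) + lam * (\<integral>u. pol s x u * ln (g u) \<partial>lborel)"
    unfolding VS(2) pe step_alg[symmetric, of k x "\<integral>u. pol s x u * u \<partial>lborel" "\<integral>u. u\<^sup>2 * pol s x u \<partial>lborel"] by simp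
  also have "\<dots> \<le> (\<integral>z. ctg rf R lam w T pol k (rf * x + snd z * fst z) \<partial>step_measure R pol s x)
       + lam * (\<integral>u. pol s x u * ln (pol s x u) \<partial>lborel)"
    using i1 gib lam by (intro add_mono mult_left_mono) auto
  also have "\<dots> = ctg rf R lam w T pol (Suc k) x" by (simp add: s_def)
  finally show ?case .
qed

definition ps where "ps = (\<lambda>s x u. gauss (- (a * rf * (x - (1 / rf) ^ (T - s) * w)) / (a\<^sup>2 + \<sigma>\<^sup>2))
                          (lam / (2 * (a\<^sup>2 + \<sigma>\<^sup>2)) * ((a\<^sup>2 + \<sigma>\<^sup>2) / (\<sigma>\<^sup>2 * rf\<^sup>2)) ^ (T - s - 1)) u)"

lemma ps_eq: assumes "Suc k \<le> T" shows "ps (T - Suc k) x = gauss (mm k x) (vv k)"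
proof -
  have "T - (T - Suc k) = Suc k" "T - (T - Suc k) - 1 = k" using assms by auto
  then show ?thesis unfolding ps_def mm_def vv_def AA_def by simp
qed

lemma ps_ctg: "k \<le> T \<Longrightarrow> ctg rf R lam w T ps k x = VV k x"
proof (induction k arbitrary: x)
  case 0
  then show ?case by (simp add: VV_def CC_def)
next
  case (Suc k)
  define s where "s = T - Suc k"
  have sT: "s < T" using Suc.prems by (simp add: s_def)
  have pe: "ps s x = gauss (mm k x) (vv k)" unfolding s_def by (rule ps_eq[OF Suc.prems])
  have d: "dens (ps s x)" unfolding pe by (rule gauss_dens(1)[OF vv_pos])
  note VS = VV_step[of s ps x k, OF sT d]
  have IH: "ctg rf R lam w T ps k z = VV k z" for z using Suc.IH Suc.prems by simp
  have "ctg rf R lam w T ps (Suc k) x = (\<integral>z. VV k (rf * x + snd z * fst z) \<partial>step_measure R ps s x)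
       + lam * (\<integral>u. ps s x u * ln (gauss (mm k x) (vv k) u) \<partial>lborel)"
    by (simp add: s_def[symmetric] IH pe)
  also have "\<dots> = VV (Suc k) x"
    unfolding VS(2) plng(2)[OF d vv_pos] step_alg[symmetric, of k x "\<integral>u. ps s x u * u \<partial>lborel" "\<integral>u. u\<^sup>2 * ps s x u \<partial>lborel"] by simp
  finally show ?case .
qed

lemma ps_adm: "admissible rf R lam w T ps t"
  unfolding admissible_def
proof (intro allI impI)
  fix s x assume st: "t \<le> s \<and> s < T"
  define k where "k = T - Suc s"
  have sk: "s = T - Suc k" "Suc k \<le> T" using st by (auto simp: k_def)
  have pe: "ps s x = gauss (mm k x) (vv k)" unfolding sk(1) by (rule ps_eq[OF sk(2)])
  have d: "dens (ps s x)" unfolding pe by (rule gauss_dens(1)[OF vv_pos])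
  have l: "integrable lborel (\<lambda>u. ps s x u * ln (ps s x u))" unfolding pe by (rule gauss_dens(2)[OF vv_pos])
  have c: "(\<lambda>p. ctg rf R lam w T ps k (rf * x + snd p * fst p)) = (\<lambda>p. VV k (rf * x + snd p * fst p))"
    using ps_ctg sk(2) by simp
  have "integrable (step_measure R ps s x) (\<lambda>p. ctg rf R lam w T ps k (rf * x + snd p * fst p))"
    unfolding c using VV_step(1)[of s ps x k] st d by simp
  then show "ps s x \<in> borel_measurable borel \<and> (\<forall>u. 0 \<le> ps s x u) \<and> integrable lborel (ps s x) \<and>
       (\<integral>u. ps s x u \<partial>lborel) = 1 \<and> integrable lborel (\<lambda>u. u\<^sup>2 * ps s x u) \<and>
       integrable lborel (\<lambda>u. ps s x u * ln (ps s x u)) \<and>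
       integrable (step_measure R ps s x) (\<lambda>p. ctg rf R lam w T ps (T - Suc s) (rf * x + snd p * fst p))"
    using d l by (simp add: dens_def k_def)
qed

lemma J_eq: assumes "t \<le> T" shows "J_opt rf R lam w b T t x = VV (T - t) x - (w - b)\<^sup>2"
  unfolding J_opt_def
proof (rule cInf_eq_minimum)
  show "VV (T - t) x - (w - b)\<^sup>2 \<in> {ctg rf R lam w T pol (T - t) x - (w - b)\<^sup>2 |pol. admissible rf R lam w T pol t}"
    using ps_adm ps_ctg[of "T - t" x] by force
  fix y assume "y \<in> {ctg rf R lam w T pol (T - t) x - (w - b)\<^sup>2 |pol. admissible rf R lam w T pol t}"
  then obtain pol where "admissible rf R lam w T pol t" "y = ctg rf R lam w T pol (T - t) x - (w - b)\<^sup>2" by auto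
  then show "VV (T - t) x - (w - b)\<^sup>2 \<le> y" using lower[of pol t "T - t" x] by simp
qed

end

lemma sum_re: "(t::nat) \<le> T \<Longrightarrow> (\<Sum>i = t + 1..T. f (T - i)) = (\<Sum>j<T - t. f j)"
  by (rule sum.reindex_bij_witness[of _ "\<lambda>j. T - j" "\<lambda>i. T - i"]) auto

theorem theorem1:
  fixes T :: nat and rf a \<sigma> lam b w :: real and R :: "nat \<Rightarrow> real measure"
  assumes "T \<ge> 1" and "rf > 0" and "\<sigma> > 0" and "lam > 0"
    and "\<And>t. t < T \<Longrightarrow> prob_space (R t) \<and> sets (R t) = sets borel
            \<and> integrable (R t) (\<lambda>r. r) \<and> integrable (R t) (\<lambda>r. r\<^sup>2)
            \<and> (\<integral>r. r \<partial>R t) = a \<and> (\<integral>r. (r - a)\<^sup>2 \<partial>R t) = \<sigma>\<^sup>2"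
  shows "(\<forall>t x. t \<le> T \<longrightarrow>
           J_opt rf R lam w b T t x =
             (\<sigma>\<^sup>2 * rf\<^sup>2 / (a\<^sup>2 + \<sigma>\<^sup>2)) ^ (T - t) * (x - (1 / rf) ^ (T - t) * w)\<^sup>2
             + lam / 2 * real (T - t) * ln ((a\<^sup>2 + \<sigma>\<^sup>2) / (pi * lam))
             + lam / 2 * (\<Sum>i = t + 1..T. real (T - i) * ln (\<sigma>\<^sup>2 * rf\<^sup>2 / (a\<^sup>2 + \<sigma>\<^sup>2)))
             - (w - b)\<^sup>2)
       \<and> (let pstar = (\<lambda>s x u. gauss (- (a * rf * (x - (1 / rf) ^ (T - s) * w)) / (a\<^sup>2 + \<sigma>\<^sup>2))
                          (lam / (2 * (a\<^sup>2 + \<sigma>\<^sup>2)) * ((a\<^sup>2 + \<sigma>\<^sup>2) / (\<sigma>\<^sup>2 * rf\<^sup>2)) ^ (T - s - 1)) u)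
          in \<forall>t. t < T \<longrightarrow> admissible rf R lam w T pstar t
               \<and> (\<forall>x. ctg rf R lam w T pstar (T - t) x - (w - b)\<^sup>2 = J_opt rf R lam w b T t x))"
proof -
  interpret M: mvs T rf a \<sigma> lam w R
    by unfold_locales (use assms in auto)
  have form: "M.VV (T - t) x - (w - b)\<^sup>2 =
             (\<sigma>\<^sup>2 * rf\<^sup>2 / (a\<^sup>2 + \<sigma>\<^sup>2)) ^ (T - t) * (x - (1 / rf) ^ (T - t) * w)\<^sup>2
             + lam / 2 * real (T - t) * ln ((a\<^sup>2 + \<sigma>\<^sup>2) / (pi * lam))
             + lam / 2 * (\<Sum>i = t + 1..T. real (T - i) * ln (\<sigma>\<^sup>2 * rf\<^sup>2 / (a\<^sup>2 + \<sigma>\<^sup>2)))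
             - (w - b)\<^sup>2" if "t \<le> T" for t x
    using sum_re[OF that, of "\<lambda>j. real j * ln (\<sigma>\<^sup>2 * rf\<^sup>2 / (a\<^sup>2 + \<sigma>\<^sup>2))"]
    by (simp add: M.VV_def M.CC_def M.qq_def M.AA_def)
  show ?thesis
    unfolding M.ps_def[symmetric] Let_def
  proof (intro conjI allI impI)
    fix t x assume "t \<le> T"
    then show "J_opt rf R lam w b T t x =
             (\<sigma>\<^sup>2 * rf\<^sup>2 / (a\<^sup>2 + \<sigma>\<^sup>2)) ^ (T - t) * (x - (1 / rf) ^ (T - t) * w)\<^sup>2
             + lam / 2 * real (T - t) * ln ((a\<^sup>2 + \<sigma>\<^sup>2) / (pi * lam))
             + lam / 2 * (\<Sum>i = t + 1..T. real (T - i) * ln (\<sigma>\<^sup>2 * rf\<^sup>2 / (a\<^sup>2 + \<sigma>\<^sup>2)))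
             - (w - b)\<^sup>2"
      using M.J_eq form by simp
  next
    fix t assume "t < T"
    then show "admissible rf R lam w T M.ps t" using M.ps_adm by simp
  next
    fix t x assume "t < T"
    then show "ctg rf R lam w T M.ps (T - t) x - (w - b)\<^sup>2 = J_opt rf R lam w b T t x"
      using M.J_eq M.ps_ctg by simp
  qed
qed

end
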